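(* Let $l\ge 1$ and $0\le k\le l-1$. The $(k+1)$-qubit gate $C^kZ^{2^{k-l+1}}$ can be implemented exactly by a circuit consisting of CNOT gates and a single layer (i.e. gates acting in parallel on distinct qubits) of the single-qubit gates $Z^{2^{1-l}}$ and $(Z^{2^{1-l}})^{-1}$, using additional ancilla qubits initialized to $|0\rangle$ and returned to $|0\rangle$.
   Context: $C^kZ^{2^{k-l+1}}$ is the diagonal gate on $k+1$ qubits acting as the identity on all computational basis states except $|1^{k+1}\rangle$, which it multiplies by the phase $e^{i\pi 2^{1+k-l}}$. The single-qubit gate $Z^{2^{1-l}}=|0\rangle\langle0|+e^{i\pi 2^{1-l}}|1\rangle\langle1|$. *)

theory Defs
  imports Complex_Main
begin

text \<open>Computational basis states of an n-qubit register are bool lists of length n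
  (qubit i is list position i, True = |1>). A state vector is a function from
  basis labels to complex amplitudes (only labels of the register length matter).\<close>

type_synonym qstate = "bool list \<Rightarrow> complex"

datatype gate = CNOT nat nat | Phase nat complex

fun apply_gate :: "gate \<Rightarrow> qstate \<Rightarrow> qstate" where
  "apply_gate (CNOT c t) \<psi> = (\<lambda>x. \<psi> (x[t := (x ! t \<noteq> x ! c)]))"
| "apply_gate (Phase j z) \<psi> = (\<lambda>x. (if x ! j then z else 1) * \<psi> x)"

fun run :: "gate list \<Rightarrow> qstate \<Rightarrow> qstate" where
  "run [] \<psi> = \<psi>"
| "run (g # gs) \<psi> = run gs (apply_gate g \<psi>)"

definition is_cnot :: "nat \<Rightarrow> gate \<Rightarrow> bool" where
  "is_cnot n g \<longleftrightarrow> (\<exists>c t. g = CNOT c t \<and> c < n \<and> t < n \<and> c \<noteq> t)"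

text \<open>The single-qubit gate Z^(2^(1-l)) = diag(1, e^(i pi 2^(1-l))).\<close>
definition omega :: "nat \<Rightarrow> complex" where
  "omega l = cis (pi * 2 powr (1 - real l))"

definition phase_layer :: "nat \<Rightarrow> nat \<Rightarrow> gate list \<Rightarrow> bool" where
  "phase_layer n l L \<longleftrightarrow>
     (\<exists>js zs. L = map2 Phase js zs \<and> length js = length zs \<and> distinct js \<and>
        (\<forall>j\<in>set js. j < n) \<and> (\<forall>z\<in>set zs. z = omega l \<or> z = inverse (omega l)))"

definition embed :: "nat \<Rightarrow> nat \<Rightarrow> qstate \<Rightarrow> qstate" where
  "embed d a \<psi> = (\<lambda>y. if length y = d + a \<and> drop d y = replicate a False
                       then \<psi> (take d y) else 0)"

definition CkZ :: "nat \<Rightarrow> nat \<Rightarrow> qstate \<Rightarrow> qstate" where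
  "CkZ k l \<psi> = (\<lambda>x. (if x = replicate (k+1) True
                       then cis (pi * 2 powr (1 + real k - real l)) else 1) * \<psi> x)"

end

theory Submission imports Defs begin

lemma run_append: "run (xs @ ys) \<psi> = run ys (run xs \<psi>)"
  by (induction xs arbitrary: \<psi>) auto

fun cmap :: "gate list \<Rightarrow> bool list \<Rightarrow> bool list" where
  "cmap [] x = x"
| "cmap (CNOT c t # gs) x = (let z = cmap gs x in z[t := (z ! t \<noteq> z ! c)])"
| "cmap (Phase j w # gs) x = cmap gs x"

lemma run_cnots: "\<forall>g\<in>set gs. \<exists>c t. g = CNOT c t \<Longrightarrow> run gs \<psi> = (\<lambda>x. \<psi> (cmap gs x))"
proof (induction gs arbitrary: \<psi>)
  case Nil then show ?case by simp
next
  case (Cons g gs)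
  then obtain c t where g: "g = CNOT c t" by auto
  show ?case using Cons by (simp add: g Let_def)
qed

lemma length_cmap[simp]: "length (cmap gs x) = length x"
  by (induction gs x rule: cmap.induct) (auto simp: Let_def)

definition cnt :: "gate list \<Rightarrow> bool list \<Rightarrow> nat \<Rightarrow> nat" where
  "cnt gs y j = length (filter (\<lambda>g. case g of CNOT c t \<Rightarrow> t = j \<and> y ! c | Phase _ _ \<Rightarrow> False) gs)"

definition good :: "nat \<Rightarrow> nat \<Rightarrow> gate list \<Rightarrow> bool" where
  "good n N gs \<longleftrightarrow> (\<forall>g\<in>set gs. \<exists>c t. g = CNOT c t \<and> c < n \<and> n \<le> t \<and> t < N)"

lemma cnt_low: "good n N gs \<Longrightarrow> j < n \<Longrightarrow> cnt gs y j = 0"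
  unfolding cnt_def good_def by (auto simp: filter_empty_conv split: gate.splits)

lemma cmap_nth: "good n (length y) gs \<Longrightarrow> j < length y \<Longrightarrow> cmap gs y ! j = (y ! j \<noteq> odd (cnt gs y j))"
proof (induction gs arbitrary: j)
  case Nil then show ?case by (simp add: cnt_def)
next
  case (Cons g gs)
  then obtain c t where g: "g = CNOT c t" and ct: "c < n" "n \<le> t" "t < length y" by (auto simp: good_def)
  have gs: "good n (length y) gs" using Cons.prems by (auto simp: good_def)
  have zc: "cmap gs y ! c = y ! c" using Cons.IH[OF gs, of c] cnt_low[OF gs ct(1)] ct by simp
  show ?case
  proof (cases "j = t")
    case True
    then show ?thesis using Cons.IH[OF gs, of t] ct zc by (auto simp: g Let_def cnt_def)
  next
    case False
    then show ?thesis using Cons.IH[OF gs, of j] Cons.prems by (auto simp: g Let_def cnt_def)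
  qed
qed

lemma cnt_cmap: "good n (length y) gs \<Longrightarrow> cnt gs (cmap gs y) j = cnt gs y j"
proof -
  assume gd: "good n (length y) gs"
  have "\<forall>g\<in>set gs. (case g of CNOT c t \<Rightarrow> t = j \<and> cmap gs y ! c | Phase _ _ \<Rightarrow> False)
      = (case g of CNOT c t \<Rightarrow> t = j \<and> y ! c | Phase _ _ \<Rightarrow> False)"
  proof
    fix g assume "g \<in> set gs"
    then obtain c t where g: "g = CNOT c t" and ct: "c < n" "n \<le> t" "t < length y" using gd by (auto simp: good_def)
    have "cmap gs y ! c = y ! c" using cmap_nth[OF gd, of c] cnt_low[OF gd ct(1)] ct by simp
    then show "(case g of CNOT c t \<Rightarrow> t = j \<and> cmap gs y ! c | Phase _ _ \<Rightarrow> False)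
      = (case g of CNOT c t \<Rightarrow> t = j \<and> y ! c | Phase _ _ \<Rightarrow> False)" by (simp add: g)
  qed
  then show ?thesis unfolding cnt_def by (metis (no_types, lifting) filter_cong)
qed

lemma cmap_invol: "good n (length y) gs \<Longrightarrow> cmap gs (cmap gs y) = y"
proof (rule nth_equalityI)
  assume gd: "good n (length y) gs"
  show "length (cmap gs (cmap gs y)) = length y" by simp
  fix j assume j: "j < length (cmap gs (cmap gs y))"
  have gd2: "good n (length (cmap gs y)) gs" using gd by simp
  show "cmap gs (cmap gs y) ! j = y ! j"
    using cmap_nth[OF gd2, of j] cmap_nth[OF gd, of j] cnt_cmap[OF gd, of j] j by auto
qed


fun cn :: "nat \<Rightarrow> nat list list \<Rightarrow> gate list" where
  "cn b [] = []"
| "cn b (S # Ss) = map (\<lambda>i. CNOT i b) S @ cn (Suc b) Ss"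

lemma cn_set: "g \<in> set (cn b Ss) \<Longrightarrow> \<exists>c t m. g = CNOT c t \<and> m < length Ss \<and> t = b + m \<and> c \<in> set (Ss ! m)"
proof (induction b Ss rule: cn.induct)
  case (1 b) then show ?case by simp
next
  case (2 b S Ss)
  show ?case
  proof (cases "g \<in> set (map (\<lambda>i. CNOT i b) S)")
    case True then show ?thesis by force
  next
    case False
    then have "g \<in> set (cn (Suc b) Ss)" using 2 by simp
    from "2.IH"[OF this] obtain c t m where "g = CNOT c t \<and> m < length Ss \<and> t = Suc b + m \<and> c \<in> set (Ss ! m)" by blast
    then show ?thesis by (intro exI[of _ c] exI[of _ t] exI[of _ "Suc m"]) auto
  qed
qed

lemma cnt_cn: "cnt (cn b Ss) y j = (if b \<le> j \<and> j < b + length Ss then length (filter (\<lambda>i. y ! i) (Ss ! (j - b))) else 0)"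
proof (induction b Ss arbitrary: j rule: cn.induct)
  case (1 b) then show ?case by (auto simp: cnt_def)
next
  case (2 b S Ss)
  have a: "cnt (map (\<lambda>i. CNOT i b) S) y j = (if j = b then length (filter (\<lambda>i. y ! i) S) else 0)"
    unfolding cnt_def by (induction S) auto
  have "cnt (cn b (S # Ss)) y j = cnt (map (\<lambda>i. CNOT i b) S) y j + cnt (cn (Suc b) Ss) y j"
    by (simp add: cnt_def)
  also have "\<dots> = (if b \<le> j \<and> j < b + length (S # Ss) then length (filter (\<lambda>i. y ! i) ((S # Ss) ! (j - b))) else 0)"
    unfolding a "2.IH"
    by (cases "j = b"; cases "b < j") (auto simp: nth_Cons' Suc_diff_Suc)
  finally show ?case .
qed

fun lp :: "(nat list \<Rightarrow> complex) \<Rightarrow> nat \<Rightarrow> nat list list \<Rightarrow> gate list" where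
  "lp zf b [] = []"
| "lp zf b (S # Ss) = Phase b (zf S) # lp zf (Suc b) Ss"

fun phasef :: "(nat list \<Rightarrow> complex) \<Rightarrow> nat \<Rightarrow> nat list list \<Rightarrow> bool list \<Rightarrow> complex" where
  "phasef zf b [] x = 1"
| "phasef zf b (S # Ss) x = (if x ! b then zf S else 1) * phasef zf (Suc b) Ss x"

lemma run_lp: "run (lp zf b Ss) \<psi> x = phasef zf b Ss x * \<psi> x"
  by (induction zf b Ss arbitrary: \<psi> rule: lp.induct) auto

lemma lp_map2: "lp zf b Ss = map2 Phase [b..<b + length Ss] (map zf Ss)"
  by (induction zf b Ss rule: lp.induct) (auto simp del: upt_Suc simp add: upt_conv_Cons)

lemma phasef_eval: "(\<forall>m<length Ss. x ! (b + m) = P (Ss ! m)) \<Longrightarrow>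
   phasef zf b Ss x = prod_list (map (\<lambda>S. if P S then zf S else 1) Ss)"
proof (induction zf b Ss x rule: phasef.induct)
  case (1 zf b x) then show ?case by simp
next
  case (2 zf b S Ss x)
  have "\<forall>m<length Ss. x ! (Suc b + m) = P (Ss ! m)"
    using "2.prems" by (metis Suc_less_eq add_Suc add_Suc_right length_Cons nth_Cons_Suc)
  moreover have "x ! b = P S" using "2.prems" by (metis add_0_right length_Cons nth_Cons_0 zero_less_Suc)
  ultimately show ?case using "2.IH" by simp
qed

lemma sum_list_neg: "sum_list (map (\<lambda>x. - f x) xs) = - sum_list (map f xs :: int list)"
  by (induction xs) auto

lemma sumU: "sum_list (map (\<lambda>S. (-1::int) ^ length S) (subseqs xs)) = (if xs = [] then 1 else 0)"
proof (induction xs)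
  case Nil then show ?case by simp
next
  case (Cons x xs)
  then show ?case by (simp add: Let_def o_def sum_list_neg)
qed

lemma sumT: "sum_list (map (\<lambda>S. (-1::int) ^ length S * (-1) ^ length (filter P S)) (subseqs xs))
   = (if \<forall>x\<in>set xs. P x then 2 ^ length xs else 0)"
proof (induction xs)
  case Nil then show ?case by simp
next
  case (Cons x xs)
  have e: "sum_list (map (\<lambda>S. (-1::int) ^ length S * (-1) ^ length (filter P S)) (subseqs (x # xs)))
    = (if P x then 2 else 0) * sum_list (map (\<lambda>S. (-1::int) ^ length S * (-1) ^ length (filter P S)) (subseqs xs))"
    by (simp add: Let_def o_def sum_list_neg sum_list_const_mult[symmetric])
  show ?case unfolding e Cons.IH by auto
qed


lemma prod_powi: "(w::complex) \<noteq> 0 \<Longrightarrow> prod_list (map (\<lambda>S. w powi f S) L) = w powi sum_list (map f L)"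
  by (induction L) (auto simp: power_int_add)

lemma prod_identity:
  fixes w :: complex
  assumes w: "w \<noteq> 0" and xs: "xs \<noteq> []"
  shows "prod_list (map (\<lambda>S. if odd (length (filter P S)) then (if odd (length S) then w else inverse w) else 1) (subseqs xs))
     = (if \<forall>x\<in>set xs. P x then w ^ (2 ^ (length xs - 1)) else 1)"
proof -
  define f where "f S = (if odd (length (filter P S)) then (if odd (length S) then 1 else -1) else (0::int))" for S :: "'a list"
  have t: "(if odd (length (filter P S)) then (if odd (length S) then w else inverse w) else 1) = w powi f S" for S
    by (auto simp: f_def power_int_minus)
  have two: "2 * f S = (-1::int) ^ length S * (-1) ^ length (filter P S) - (-1) ^ length S" for S
    by (auto simp: f_def)
  have "2 * sum_list (map f (subseqs xs)) = sum_list (map (\<lambda>S. 2 * f S) (subseqs xs))"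
    by (simp add: sum_list_const_mult)
  also have "\<dots> = sum_list (map (\<lambda>S. (-1::int) ^ length S * (-1) ^ length (filter P S)) (subseqs xs))
      - sum_list (map (\<lambda>S. (-1::int) ^ length S) (subseqs xs))"
    unfolding two by (simp add: sum_list_subtractf)
  also have "\<dots> = (if \<forall>x\<in>set xs. P x then 2 ^ length xs else 0)" using sumT[of P xs] sumU[of xs] xs by simp
  finally have s: "sum_list (map f (subseqs xs)) = (if \<forall>x\<in>set xs. P x then 2 ^ (length xs - 1) else 0)"
    using xs by (cases "length xs") (auto split: if_splits)
  show ?thesis unfolding t prod_powi[OF w] s by (auto simp flip: power_int_of_nat)
qed

lemma omega_pow: "omega l ^ (2 ^ k) = cis (pi * 2 powr (1 + real k - real l))"
proof -
  have "real (2 ^ k) * (pi * 2 powr (1 - real l)) = pi * (2 powr real k * 2 powr (1 - real l))"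
    by (simp add: powr_realpow)
  also have "\<dots> = pi * 2 powr (1 + real k - real l)"
    by (simp add: powr_add[symmetric] algebra_simps)
  finally have e: "real (2 ^ k) * (pi * 2 powr (1 - real l)) = pi * 2 powr (1 + real k - real l)" .
  show ?thesis unfolding omega_def DeMoivre e ..
qed


lemma subseqs_set: "S \<in> set (subseqs xs) \<Longrightarrow> set S \<subseteq> set xs"
  using subseqs_powset[of xs] by blast

theorem theorem4:
  fixes k l :: nat
  assumes "l \<ge> 1" and "k \<le> l - 1"
  shows "\<exists>a pre layer post.
           (\<forall>g\<in>set pre. is_cnot (k + 1 + a) g) \<and>
           (\<forall>g\<in>set post. is_cnot (k + 1 + a) g) \<and>
           phase_layer (k + 1 + a) l layer \<and>
           (\<forall>\<psi>. run (pre @ layer @ post) (embed (k + 1) a \<psi>)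
                 = embed (k + 1) a (CkZ k l \<psi>))"
proof -
  define n where "n = k + 1"
  define Ss where "Ss = subseqs [0..<n]"
  define a where "a = length Ss"
  define zf where "zf S = (if odd (length S) then omega l else inverse (omega l))" for S :: "nat list"
  define pre where "pre = cn n Ss"
  define layer where "layer = lp zf n Ss"
  have Ssm: "m < a \<Longrightarrow> set (Ss ! m) \<subseteq> {0..<n}" for m
    using subseqs_set[of "Ss ! m" "[0..<n]"] unfolding a_def Ss_def by auto
  have pre_set: "g \<in> set pre \<Longrightarrow> \<exists>c t. g = CNOT c t \<and> c < n \<and> n \<le> t \<and> t < n + a" for g
  proof -
    assume "g \<in> set pre"
    from cn_set[OF this[unfolded pre_def]] obtain c t m where
      "g = CNOT c t" "m < length Ss" "t = n + m" "c \<in> set (Ss ! m)" by blast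
    then show ?thesis using Ssm[of m] unfolding a_def by auto
  qed
  have gd: "length y = n + a \<Longrightarrow> good n (length y) pre" for y
    using pre_set unfolding good_def by auto
  have cn_ok: "\<forall>g\<in>set pre. is_cnot (k + 1 + a) g"
    using pre_set unfolding is_cnot_def n_def by fastforce
  have pl: "phase_layer (k + 1 + a) l layer"
    unfolding phase_layer_def layer_def lp_map2
    by (intro exI[of _ "[n..<n + length Ss]"] exI[of _ "map zf Ss"]) (auto simp: n_def a_def zf_def Suc_le_eq)
  have allc: "\<forall>g\<in>set pre. \<exists>c t. g = CNOT c t" using pre_set by blast
  have main: "run (pre @ layer @ pre) (embed n a \<psi>) = embed n a (CkZ k l \<psi>)" for \<psi>
  proof
    fix y
    have "run (pre @ layer @ pre) (embed n a \<psi>) y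
        = phasef zf n Ss (cmap pre y) * embed n a \<psi> (cmap pre (cmap pre y))"
      by (simp add: run_append run_cnots[OF allc] layer_def run_lp)
    also have "\<dots> = embed n a (CkZ k l \<psi>) y"
    proof (cases "length y = n + a")
      case False
      then show ?thesis by (simp add: embed_def)
    next
      case len: True
      note g = gd[OF len]
      have inv: "cmap pre (cmap pre y) = y" by (rule cmap_invol[OF g])
      show ?thesis
      proof (cases "drop n y = replicate a False")
        case False
        then show ?thesis by (simp add: inv embed_def)
      next
        case dr: True
        have anc: "m < a \<Longrightarrow> y ! (n + m) = False" for m
          using arg_cong[OF dr, of "\<lambda>l. l ! m"] len by simp
        have ev: "\<forall>m<length Ss. cmap pre y ! (n + m) = odd (length (filter (\<lambda>i. y ! i) (Ss ! m)))"
        proof (intro allI impI)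
          fix m assume m: "m < length Ss"
          show "cmap pre y ! (n + m) = odd (length (filter (\<lambda>i. y ! i) (Ss ! m)))"
            using cmap_nth[OF g, of "n + m"] m len anc[of m] unfolding pre_def cnt_cn a_def by simp
        qed
        have w: "omega l \<noteq> 0" by (simp add: omega_def)
        have ph: "phasef zf n Ss (cmap pre y) = (if \<forall>x\<in>set [0..<n]. y ! x then omega l ^ (2 ^ (length [0..<n] - 1)) else 1)"
        proof -
          have "phasef zf n Ss (cmap pre y) = prod_list (map (\<lambda>S. if odd (length (filter (\<lambda>i. y ! i) S)) then zf S else 1) Ss)"
            by (rule phasef_eval[where P="\<lambda>S. odd (length (filter (\<lambda>i. y ! i) S))"]) (use ev in simp)
          also have "\<dots> = (if \<forall>x\<in>set [0..<n]. y ! x then omega l ^ (2 ^ (length [0..<n] - 1)) else 1)"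
            unfolding zf_def Ss_def by (rule prod_identity[OF w]) (simp add: n_def)
          finally show ?thesis .
        qed
        have tk: "(take n y = replicate n True) = (\<forall>x\<in>set [0..<n]. y ! x)"
          using len by (auto simp: list_eq_iff_nth_eq)
        show ?thesis
        proof (cases "\<forall>x\<in>set [0..<n]. y ! x")
          case True
          then have "take (k+1) y = replicate (k+1) True" using tk by (simp add: n_def)
          then show ?thesis using len dr True unfolding inv ph embed_def CkZ_def
            by (simp add: n_def omega_pow)
        next
          case False
          then have "take (k+1) y \<noteq> replicate (k+1) True" using tk by (simp add: n_def)
          then show ?thesis using len dr False unfolding inv ph embed_def CkZ_def
            by (auto simp add: n_def)
        qed
      qed
    qed
    finally show "run (pre @ layer @ pre) (embed n a \<psi>) y = embed n a (CkZ k l \<psi>) y" .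
  qed
  show ?thesis
    by (intro exI[of _ a] exI[of _ pre] exI[of _ layer] exI[of _ pre])
       (use cn_ok pl main in \<open>simp add: n_def\<close>)
qed

end
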